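(* Let $X_S\in\mathbb{R}^{n_S\times d}$ be fixed with $\hat\Sigma_S:=X_S^\top X_S/n_S$ invertible, $\sigma>0$, $r>0$, $\Sigma_T\in\mathbb{R}^{d\times d}$ symmetric positive semidefinite, and $\mathbf{y}_S=X_S\boldsymbol{\beta}^*+\mathbf{z}$ with $\mathbf{z}\sim\mathcal{N}(0,\sigma^2I_{n_S})$, $\boldsymbol{\beta}^*\in\mathcal{B}:=\{\boldsymbol{\beta}:\|\boldsymbol{\beta}\|_2\le r\}$. Let $L_{\mathcal{B}}(\hat{\boldsymbol{\beta}}):=\max_{\boldsymbol{\beta}^*\in\mathcal{B}}\mathbb{E}_{\mathbf{z}}\|\Sigma_T^{1/2}(\hat{\boldsymbol{\beta}}(\mathbf{y}_S)-\boldsymbol{\beta}^* )\|^2$ and $\hat{\boldsymbol{\beta}}_{\mathrm{SS}}:=\frac1{n_S}\hat\Sigma_S^{-1}X_S^\top\mathbf{y}_S$. Then the minimax linear estimator is of the form $C\hat{\boldsymbol{\beta}}_{\mathrm{SS}}$: for every $A\in\mathbb{R}^{d\times n_S}$ there exists $C\in\mathbb{R}^{d\times d}$ with $L_{\mathcal{B}}(\mathbf{y}_S\mapsto C\hat{\boldsymbol{\beta}}_{\mathrm{SS}})\le L_{\mathcal{B}}(\mathbf{y}_S\mapsto A\mathbf{y}_S)$; in particular $\inf_{A}L_{\mathcal{B}}(A\mathbf{y}_S)=\inf_{C}L_{\mathcal{B}}(C\hat{\boldsymbol{\beta}}_{\mathrm{SS}})$. *)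

theory Defs
  imports "HOL-Probability.Probability"
begin

definition gauss_noise :: "real \<Rightarrow> (real ^ 'n) measure" where
  "gauss_noise \<sigma> = density lborel (\<lambda>z. ennreal (\<Prod>i\<in>UNIV. normal_density 0 \<sigma> (z $ i)))"

text \<open>Squared weighted norm  norm (Sigma_T^(1/2) v)^2 = v^T Sigma_T v.\<close>
definition wnorm2 :: "real ^ 'd ^ 'd \<Rightarrow> real ^ 'd \<Rightarrow> real" where
  "wnorm2 SigT v = v \<bullet> (SigT *v v)"

definition worst_risk ::
  "real ^ 'd ^ 'd \<Rightarrow> real ^ 'd ^ 'n \<Rightarrow> real \<Rightarrow> real \<Rightarrow> (real ^ 'n \<Rightarrow> real ^ 'd) \<Rightarrow> real" where
  "worst_risk SigT XS \<sigma> r est =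
     (SUP \<beta>\<in>cball 0 r. \<integral>z. wnorm2 SigT (est (XS *v \<beta> + z) - \<beta>) \<partial>gauss_noise \<sigma>)"

definition Sigma_hat :: "real ^ 'd ^ 'n \<Rightarrow> real ^ 'd ^ 'd" where
  "Sigma_hat XS = (1 / real CARD('n)) *\<^sub>R (transpose XS ** XS)"

definition beta_SS :: "real ^ 'd ^ 'n \<Rightarrow> real ^ 'n \<Rightarrow> real ^ 'd" where
  "beta_SS XS y = (1 / real CARD('n)) *\<^sub>R (matrix_inv (Sigma_hat XS) *v (transpose XS *v y))"

end

theory Submission
  imports Defs
begin

lemma axis1_in_Basis: "axis i (1::real) \<in> (Basis :: (real^'n::finite) set)"
  by (auto simp: Basis_vec_def)

lemma vec_sum_basis:
  fixes f :: "(real^'n::finite) \<Rightarrow> real"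
  shows "(\<Sum>b\<in>Basis. f b *\<^sub>R b) $ i = f (axis i 1)"
proof -
  have "(\<Sum>b\<in>Basis. f b *\<^sub>R b) $ i = (\<Sum>b\<in>Basis. f b *\<^sub>R b) \<bullet> axis i 1"
    by (rule cart_eq_inner_axis)
  also have "\<dots> = (\<Sum>b\<in>Basis. f b * (b \<bullet> axis i 1))"
    by (simp add: inner_sum_left)
  also have "\<dots> = (\<Sum>b\<in>Basis. if b = axis i 1 then f b else 0)"
    by (intro sum.cong refl) (auto simp: inner_Basis axis1_in_Basis)
  also have "\<dots> = f (axis i 1)" by (simp add: axis1_in_Basis)
  finally show ?thesis .
qed

lemma Basis_vec_range: "(Basis :: (real^'n::finite) set) = range (\<lambda>i. axis i 1)"
  by (auto simp: Basis_vec_def)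

lemma inj_axis1: "inj (\<lambda>i::'n::finite. axis i (1::real))"
  by (auto simp: inj_def axis_eq_axis)

lemma gauss_prod:
  fixes m :: "'n::finite \<Rightarrow> nat" and \<sigma> :: real
  assumes s: "\<sigma> > 0"
  shows "integrable (gauss_noise \<sigma>) (\<lambda>z::real^'n. \<Prod>i\<in>UNIV. (z$i) ^ m i)
    \<and> (\<integral>z. (\<Prod>i\<in>UNIV. (z$i) ^ m i) \<partial>gauss_noise \<sigma>)
       = (\<Prod>i\<in>UNIV. \<integral>x. normal_density 0 \<sigma> x * x ^ m i \<partial>lborel)"
proof -
  define g where "g = (\<lambda>z::real^'n. \<Prod>i\<in>UNIV. normal_density 0 \<sigma> (z $ i))"
  define h where "h = (\<lambda>z::real^'n. \<Prod>i\<in>UNIV. (z$i) ^ m i)"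
  define T where "T = (\<lambda>f. \<Sum>b\<in>(Basis::(real^'n) set). f b *\<^sub>R b)"
  define \<psi> where "\<psi> = (\<lambda>i x. normal_density 0 \<sigma> x * x ^ m i)"
  define \<psi>' where "\<psi>' = (\<lambda>b. \<psi> (inv (\<lambda>i::'n. axis i (1::real)) b))"
  have gm[measurable]: "g \<in> borel_measurable lborel" unfolding g_def by measurable
  have hm[measurable]: "h \<in> borel_measurable lborel" unfolding h_def by measurable
  have gnn: "AE x in lborel. 0 \<le> g x" unfolding g_def by (auto intro!: prod_nonneg)
  have G: "gauss_noise \<sigma> = density lborel g" unfolding gauss_noise_def g_def ..
  have Tm[measurable]: "T \<in> (\<Pi>\<^sub>M b\<in>Basis. lborel) \<rightarrow>\<^sub>M borel"
    unfolding T_def by measurable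
  have L: "lborel = distr (\<Pi>\<^sub>M b\<in>Basis. lborel) borel T"
    unfolding T_def by (rule lborel_eq)
  interpret P: product_sigma_finite "\<lambda>_::real^'n. lborel"
    by standard
  have \<psi>'ax: "\<psi>' (axis i 1) = \<psi> i" for i
    unfolding \<psi>'_def by (metis inv_f_f inj_axis1)
  have eqT: "g (T f) * h (T f) = (\<Prod>b\<in>Basis. \<psi>' b (f b))" for f
  proof -
    have "g (T f) * h (T f) = (\<Prod>i\<in>UNIV. \<psi> i (f (axis i 1)))"
      unfolding g_def h_def T_def \<psi>_def vec_sum_basis
      by (simp add: prod.distrib)
    also have "\<dots> = (\<Prod>i\<in>UNIV. \<psi>' (axis i 1) (f (axis i 1)))"
      by (simp add: \<psi>'ax)
    also have "\<dots> = (\<Prod>b\<in>Basis. \<psi>' b (f b))"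
      unfolding Basis_vec_range
      by (subst prod.reindex[OF inj_axis1]) (simp add: comp_def)
    finally show ?thesis .
  qed
  have intpsi: "integrable lborel (\<psi>' b)" for b
    unfolding \<psi>'_def \<psi>_def using integrable_normal_moment[OF s, of 0] by simp
  have int1: "integrable (\<Pi>\<^sub>M b\<in>Basis. lborel) (\<lambda>f. \<Prod>b\<in>Basis. \<psi>' b (f b))"
    by (rule P.product_integrable_prod) (auto intro: intpsi)
  have val1: "(\<integral>f. (\<Prod>b\<in>Basis. \<psi>' b (f b)) \<partial>(\<Pi>\<^sub>M b\<in>Basis. lborel))
      = (\<Prod>b\<in>Basis. integral\<^sup>L lborel (\<psi>' b))"
    by (rule P.product_integral_prod) (auto intro: intpsi)
  also have "\<dots> = (\<Prod>i\<in>UNIV. integral\<^sup>L lborel (\<psi>' (axis i 1)))"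
    unfolding Basis_vec_range
    by (subst prod.reindex[OF inj_axis1]) (simp add: comp_def)
  also have "\<dots> = (\<Prod>i\<in>UNIV. \<integral>x. normal_density 0 \<sigma> x * x ^ m i \<partial>lborel)"
    by (simp add: \<psi>'ax \<psi>_def)
  finally have val: "(\<integral>f. (\<Prod>b\<in>Basis. \<psi>' b (f b)) \<partial>(\<Pi>\<^sub>M b\<in>Basis. lborel)) = 
     (\<Prod>i\<in>UNIV. \<integral>x. normal_density 0 \<sigma> x * x ^ m i \<partial>lborel)" .
  have "integrable (gauss_noise \<sigma>) h"
    unfolding G
    apply (subst integrable_density[OF hm gm gnn])
    apply (subst L)
    apply (subst integrable_distr_eq[OF Tm])
    using int1 by (simp_all add: eqT)
  moreover have "integral\<^sup>L (gauss_noise \<sigma>) h = (\<Prod>i\<in>UNIV. \<integral>x. normal_density 0 \<sigma> x * x ^ m i \<partial>lborel)"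
    unfolding G
    apply (subst integral_density[OF hm gm gnn])
    apply (subst L)
    apply (subst integral_distr[OF Tm])
    using val by (simp_all add: eqT)
  ultimately show ?thesis unfolding h_def by simp
qed

lemma has_bochner_integral_integrable_eq:
  "integrable M f \<Longrightarrow> integral\<^sup>L M f = v \<Longrightarrow> has_bochner_integral M f v"
  by (simp add: has_bochner_integral_iff)

lemma HB0:
  assumes s: "\<sigma> > 0"
  shows "has_bochner_integral (gauss_noise \<sigma>) (\<lambda>z::real^'n::finite. 1::real) 1"
  using gauss_prod[OF s, of "\<lambda>_::'n. 0"] s
  by (intro has_bochner_integral_integrable_eq) auto

lemma HB1:
  assumes s: "\<sigma> > 0"
  shows "has_bochner_integral (gauss_noise \<sigma>) (\<lambda>z::real^'n::finite. z$k) 0"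
proof -
  have e: "(\<Prod>i\<in>UNIV. (z$i) ^ (if i = k then 1 else 0)) = z$k" for z :: "real^'n"
    by (simp add: if_distrib prod.delta cong: if_cong)
  have o: "(\<integral>x. normal_density 0 \<sigma> x * x \<partial>lborel) = 0"
    using integral_normal_moment_odd[OF s, of 0 0] by simp
  have "(\<Prod>i\<in>UNIV. \<integral>x. normal_density 0 \<sigma> x * x ^ (if i = k then 1 else 0) \<partial>lborel) = 0"
    by (rule prod_zero) (auto intro!: bexI[of _ k] simp: o)
  then show ?thesis
    using gauss_prod[OF s, of "\<lambda>i. if i = k then 1 else 0"]
    by (intro has_bochner_integral_integrable_eq) (auto simp: e)
qed

lemma HB2:
  assumes s: "\<sigma> > 0"
  shows "has_bochner_integral (gauss_noise \<sigma>) (\<lambda>z::real^'n::finite. z$k * z$l) (if k = l then \<sigma>\<^sup>2 else 0)"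
proof -
  define m where "m = (\<lambda>i. (if i = k then 1 else 0) + (if i = l then (1::nat) else 0))"
  have e: "(\<Prod>i\<in>UNIV. (z$i) ^ m i) = z$k * z$l" for z :: "real^'n"
  proof -
    have "z$i ^ m i = (if i = k then z$i else 1) * (if i = l then z$i else 1)" for i
      by (simp add: m_def power_add)
    then show ?thesis by (simp only: prod.distrib) (simp add: prod.delta)
  qed
  have o: "(\<integral>x. normal_density 0 \<sigma> x * x \<partial>lborel) = 0"
    using integral_normal_moment_odd[OF s, of 0 0] by simp
  have ev: "(\<integral>x. normal_density 0 \<sigma> x * (x * x) \<partial>lborel) = \<sigma>\<^sup>2"
    using integral_normal_moment_even[OF s, of 0 1] by (simp add: power2_eq_square)
  have "(\<Prod>i\<in>UNIV. \<integral>x. normal_density 0 \<sigma> x * x ^ m i \<partial>lborel) = (if k = l then \<sigma>\<^sup>2 else 0)"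
  proof (cases "k = l")
    case True
    have "(\<Prod>i\<in>UNIV. \<integral>x. normal_density 0 \<sigma> x * x ^ m i \<partial>lborel)
       = (\<Prod>i\<in>UNIV. if i = k then \<sigma>\<^sup>2 else 1)"
      by (intro prod.cong refl) (auto simp: m_def True ev integral_normal_density[OF s])
    then show ?thesis using True by (simp add: prod.delta)
  next
    case False
    show ?thesis using False
      by (intro trans[OF prod_zero]) (auto intro!: bexI[of _ k] simp: o m_def)
  qed
  then show ?thesis
    using gauss_prod[OF s, of m]
    by (intro has_bochner_integral_integrable_eq) (auto simp: e)
qed

lemma HBuu:
  assumes s: "\<sigma> > 0"
  shows "has_bochner_integral (gauss_noise \<sigma>)
    (\<lambda>z::real^'n::finite. (c + (\<Sum>i\<in>UNIV. b i * z$i)) * (d + (\<Sum>j\<in>UNIV. e j * z$j)))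
    (c * d + \<sigma>\<^sup>2 * (\<Sum>i\<in>UNIV. b i * e i))"
proof -
  have "has_bochner_integral (gauss_noise \<sigma>)
    (\<lambda>z::real^'n. c * d * 1 + c * (\<Sum>j\<in>UNIV. e j * z$j) + d * (\<Sum>i\<in>UNIV. b i * z$i)
        + (\<Sum>i\<in>UNIV. \<Sum>j\<in>UNIV. (b i * e j) * (z$i * z$j)))
    (c * d * 1 + c * (\<Sum>j\<in>UNIV. e j * 0) + d * (\<Sum>i\<in>UNIV. b i * 0)
        + (\<Sum>i\<in>UNIV. \<Sum>j\<in>UNIV. (b i * e j) * (if i = j then \<sigma>\<^sup>2 else 0)))"
    by (intro has_bochner_integral_add has_bochner_integral_mult_right has_bochner_integral_sum
        HB0 HB1 HB2 s)
  moreover have "(\<Sum>i\<in>UNIV. \<Sum>j\<in>UNIV. (b i * e j) * (if i = j then \<sigma>\<^sup>2 else 0))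
      = \<sigma>\<^sup>2 * (\<Sum>i\<in>UNIV. b i * e i)"
    by (simp add: if_distrib sum_distrib_left mult.commute cong: if_cong)
  moreover have "c * d * 1 + c * (\<Sum>j\<in>UNIV. e j * z$j) + d * (\<Sum>i\<in>UNIV. b i * z$i)
        + (\<Sum>i\<in>UNIV. \<Sum>j\<in>UNIV. (b i * e j) * (z$i * z$j))
      = (c + (\<Sum>i\<in>UNIV. b i * z$i)) * (d + (\<Sum>j\<in>UNIV. e j * z$j))" for z :: "real^'n"
  proof -
    have sp: "(\<Sum>i\<in>UNIV. b i * z$i) * (\<Sum>j\<in>UNIV. e j * z$j) = (\<Sum>i\<in>UNIV. \<Sum>j\<in>UNIV. (b i * e j) * (z$i * z$j))"
      by (simp add: sum_product mult_ac)
    show ?thesis by (simp only: sp[symmetric]) (simp add: algebra_simps)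
  qed
  ultimately show ?thesis by simp
qed

lemma wnorm2_expand:
  fixes S :: "real^'d::finite^'d" and B :: "real^'n::finite^'d"
  shows "wnorm2 S (c + B *v z) = (\<Sum>k\<in>UNIV. \<Sum>l\<in>UNIV. S$k$l *
     ((c$k + (\<Sum>i\<in>UNIV. B$k$i * z$i)) * (c$l + (\<Sum>j\<in>UNIV. B$l$j * z$j))))"
  by (simp add: wnorm2_def inner_vec_def matrix_vector_mult_def sum_distrib_left mult_ac)

lemma trace_BSB:
  fixes S :: "real^'d::finite^'d" and B :: "real^'n::finite^'d"
  shows "trace (transpose B ** S ** B) = (\<Sum>k\<in>UNIV. \<Sum>l\<in>UNIV. S$k$l * (\<Sum>i\<in>UNIV. B$k$i * B$l$i))"
proof -
  have "trace (transpose B ** S ** B) = (\<Sum>i\<in>UNIV. \<Sum>l\<in>UNIV. \<Sum>k\<in>UNIV. S$k$l * (B$k$i * B$l$i))"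
    by (simp add: trace_def matrix_matrix_mult_def transpose_def sum_distrib_left sum_distrib_right mult_ac)
  also have "\<dots> = (\<Sum>i\<in>UNIV. \<Sum>k\<in>UNIV. \<Sum>l\<in>UNIV. S$k$l * (B$k$i * B$l$i))"
    by (intro sum.cong refl sum.swap)
  also have "\<dots> = (\<Sum>k\<in>UNIV. \<Sum>i\<in>UNIV. \<Sum>l\<in>UNIV. S$k$l * (B$k$i * B$l$i))"
    by (rule sum.swap)
  also have "\<dots> = (\<Sum>k\<in>UNIV. \<Sum>l\<in>UNIV. \<Sum>i\<in>UNIV. S$k$l * (B$k$i * B$l$i))"
    by (intro sum.cong refl sum.swap)
  finally show ?thesis by (simp add: sum_distrib_left)
qed

lemma gauss_risk:
  fixes S :: "real^'d::finite^'d" and B :: "real^'n::finite^'d"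
  assumes s: "\<sigma> > 0"
  shows "has_bochner_integral (gauss_noise \<sigma>) (\<lambda>z. wnorm2 S (c + B *v z))
     (wnorm2 S c + \<sigma>\<^sup>2 * trace (transpose B ** S ** B))"
proof -
  have "has_bochner_integral (gauss_noise \<sigma>) (\<lambda>z. (\<Sum>k\<in>UNIV. \<Sum>l\<in>UNIV. S$k$l *
     ((c$k + (\<Sum>i\<in>UNIV. B$k$i * z$i)) * (c$l + (\<Sum>j\<in>UNIV. B$l$j * z$j)))))
     (\<Sum>k\<in>UNIV. \<Sum>l\<in>UNIV. S$k$l * (c$k * c$l + \<sigma>\<^sup>2 * (\<Sum>i\<in>UNIV. B$k$i * B$l$i)))"
    by (intro has_bochner_integral_sum has_bochner_integral_mult_right HBuu s)
  moreover have "(\<Sum>k\<in>UNIV. \<Sum>l\<in>UNIV. S$k$l * (c$k * c$l + \<sigma>\<^sup>2 * (\<Sum>i\<in>UNIV. B$k$i * B$l$i)))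
     = wnorm2 S c + \<sigma>\<^sup>2 * trace (transpose B ** S ** B)"
    unfolding trace_BSB
    by (simp add: wnorm2_def inner_vec_def matrix_vector_mult_def sum_distrib_left
        distrib_left sum.distrib mult_ac)
  ultimately show ?thesis by (simp add: wnorm2_expand)
qed

lemma cont_mv[continuous_intros]:
  fixes M :: "real^'a::finite^'b::finite"
  shows "continuous_on U f \<Longrightarrow> continuous_on U (\<lambda>x. M *v f x)"
  by (rule bounded_linear.continuous_on[of "(*v) M"])
     (simp_all add: linear_conv_bounded_linear[symmetric])

lemma bdd_bias:
  fixes S :: "real^'d::finite^'d" and D :: "real^'d^'d"
  shows "bdd_above ((\<lambda>\<beta>. wnorm2 S (D *v \<beta> - \<beta>) + k) ` cball 0 r)"
proof -
  have "continuous_on (cball 0 r) (\<lambda>\<beta>. wnorm2 S (D *v \<beta> - \<beta>) + k)"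
    unfolding wnorm2_def by (intro continuous_intros)
  then have "compact ((\<lambda>\<beta>. wnorm2 S (D *v \<beta> - \<beta>) + k) ` cball 0 r)"
    by (intro compact_continuous_image) auto
  then show ?thesis by (intro bounded_imp_bdd_above compact_imp_bounded)
qed

lemma mm_add_rdistrib: "((A::real^'n::finite^'m::finite) + B) ** (C::real^'p::finite^'n) = A ** C + B ** C"
  by (simp add: matrix_matrix_mult_def vec_eq_iff sum.distrib algebra_simps)

lemma mm_diff_rdistrib: "((A::real^'n::finite^'m::finite) - B) ** (C::real^'p::finite^'n) = A ** C - B ** C"
  by (simp add: matrix_matrix_mult_def vec_eq_iff sum_subtractf algebra_simps)

lemma transpose_add': "transpose ((A::real^'n::finite^'m::finite) + B) = transpose A + transpose B"
  by (simp add: transpose_def vec_eq_iff)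

lemma trace_nonneg:
  fixes S :: "real^'d::finite^'d" and B :: "real^'n::finite^'d"
  assumes psd: "\<And>v. v \<bullet> (S *v v) \<ge> 0"
  shows "0 \<le> trace (transpose B ** S ** B)"
proof -
  have h: "has_bochner_integral (gauss_noise 1) (\<lambda>z::real^'n. wnorm2 S (0 + B *v z))
     (wnorm2 S 0 + 1\<^sup>2 * trace (transpose B ** S ** B))"
    by (rule gauss_risk) simp
  have "0 \<le> integral\<^sup>L (gauss_noise 1) (\<lambda>z::real^'n. wnorm2 S (0 + B *v z))"
    by (rule Bochner_Integration.integral_nonneg) (simp add: wnorm2_def psd)
  also have "\<dots> = trace (transpose B ** S ** B)"
    using has_bochner_integral_integral_eq[OF h] by (simp add: wnorm2_def)
  finally show ?thesis .
qed

lemma trace_proj_le: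
  fixes S :: "real^'d::finite^'d" and A :: "real^'n::finite^'d" and P :: "real^'n^'n"
  assumes psd: "\<And>v. v \<bullet> (S *v v) \<ge> 0"
    and PT: "transpose P = P" and PP: "P ** P = P"
  shows "trace (transpose (A ** P) ** S ** (A ** P)) \<le> trace (transpose A ** S ** A)"
proof -
  define U where "U = A ** P"
  define V where "V = A - U"
  have AUV: "A = U + V" unfolding V_def by simp
  have VP: "V ** P = 0"
    unfolding V_def U_def mm_diff_rdistrib matrix_mul_assoc[symmetric] PP by simp
  have c1: "trace (transpose U ** S ** V) = 0"
  proof -
    have "transpose U ** S ** V = transpose P ** ((transpose A ** S) ** V)"
      unfolding U_def matrix_transpose_mul matrix_mul_assoc ..
    then have "trace (transpose U ** S ** V) = trace (((transpose A ** S) ** V) ** transpose P)"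
      using trace_mul_sym by metis
    also have "\<dots> = 0" unfolding PT matrix_mul_assoc[symmetric] VP by (simp add: trace_0[simplified])
    finally show ?thesis .
  qed
  have c2: "trace (transpose V ** S ** U) = 0"
  proof -
    have "trace (transpose V ** S ** U) = trace (transpose V ** ((S ** A) ** P))"
      unfolding U_def matrix_mul_assoc ..
    also have "\<dots> = trace (((S ** A) ** P) ** transpose V)"
      using trace_mul_sym by metis
    also have "P ** transpose V = transpose (V ** P)"
      using PT by (simp add: matrix_transpose_mul)
    then have "P ** transpose V = 0"
      unfolding VP by (simp add: transpose_def vec_eq_iff)
    then have "((S ** A) ** P) ** transpose V = 0"
      unfolding matrix_mul_assoc[symmetric] by simp
    finally show ?thesis by (simp add: trace_0[simplified])
  qed
  have "trace (transpose A ** S ** A) = trace (transpose U ** S ** U) + trace (transpose U ** S ** V)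
      + trace (transpose V ** S ** U) + trace (transpose V ** S ** V)"
    unfolding AUV transpose_add' mm_add_rdistrib matrix_add_ldistrib trace_add
    by (simp add: algebra_simps)
  also have "\<dots> = trace (transpose U ** S ** U) + trace (transpose V ** S ** V)"
    using c1 c2 by simp
  finally show ?thesis using trace_nonneg[OF psd, of V] unfolding U_def by simp
qed

lemma worst_lin:
  fixes S :: "real^'d::finite^'d" and X :: "real^'d^'n::finite" and M :: "real^'n^'d"
  assumes s: "\<sigma> > 0"
  shows "worst_risk S X \<sigma> r (\<lambda>y. M *v y) =
    (SUP \<beta>\<in>cball 0 r. wnorm2 S ((M ** X) *v \<beta> - \<beta>) + \<sigma>\<^sup>2 * trace (transpose M ** S ** M))"
  unfolding worst_risk_def
proof (intro SUP_cong refl)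
  fix \<beta> :: "real^'d"
  have e: "M *v (X *v \<beta> + z) - \<beta> = ((M ** X) *v \<beta> - \<beta>) + M *v z" for z
    by (simp add: matrix_vector_right_distrib matrix_vector_mul_assoc algebra_simps)
  show "(\<integral>z. wnorm2 S (M *v (X *v \<beta> + z) - \<beta>) \<partial>gauss_noise \<sigma>) =
     wnorm2 S ((M ** X) *v \<beta> - \<beta>) + \<sigma>\<^sup>2 * trace (transpose M ** S ** M)"
    unfolding e by (rule has_bochner_integral_integral_eq[OF gauss_risk[OF s]])
qed

lemma worst_lin_nonneg:
  fixes S :: "real^'d::finite^'d" and X :: "real^'d^'n::finite" and M :: "real^'n^'d"
  assumes s: "\<sigma> > 0" and r: "r > 0" and psd: "\<And>v. v \<bullet> (S *v v) \<ge> 0"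
  shows "0 \<le> worst_risk S X \<sigma> r (\<lambda>y. M *v y)"
  unfolding worst_lin[OF s]
proof (rule cSUP_upper2[OF bdd_bias])
  show "(0::real^'d) \<in> cball 0 r" using r by simp
  show "0 \<le> wnorm2 S ((M ** X) *v 0 - 0) + \<sigma>\<^sup>2 * trace (transpose M ** S ** M)"
    using trace_nonneg[OF psd, of M] by (simp add: wnorm2_def)
qed

theorem claim1:
  fixes XS :: "real ^ 'd ^ 'n" and SigT :: "real ^ 'd ^ 'd" and \<sigma> r :: real
  assumes "invertible (Sigma_hat XS)"
    and "\<sigma> > 0" and "r > 0"
    and "transpose SigT = SigT"
    and "\<And>v. v \<bullet> (SigT *v v) \<ge> 0"
  shows "(\<forall>A :: real ^ 'n ^ 'd. \<exists>C :: real ^ 'd ^ 'd.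
            worst_risk SigT XS \<sigma> r (\<lambda>y. C *v beta_SS XS y)
              \<le> worst_risk SigT XS \<sigma> r (\<lambda>y. A *v y))
       \<and> (INF A :: real ^ 'n ^ 'd. worst_risk SigT XS \<sigma> r (\<lambda>y. A *v y))
           = (INF C :: real ^ 'd ^ 'd. worst_risk SigT XS \<sigma> r (\<lambda>y. C *v beta_SS XS y))"
proof -
  note inv = assms(1) and s = assms(2) and r = assms(3) and psd = assms(5)
  define H where "H = Sigma_hat XS"
  define K where "K = matrix_inv H"
  define G where "G = (1 / real CARD('n)) *\<^sub>R (K ** transpose XS)"
  define P where "P = XS ** G"
  have HK: "H ** K = mat 1 \<and> K ** H = mat 1"
    using inv unfolding K_def H_def matrix_inv_def invertible_def by (rule someI_ex)
  have HT: "transpose H = H"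
    unfolding H_def Sigma_hat_def transpose_scalar matrix_transpose_mul by simp
  have KT: "transpose K = K"
  proof -
    have "H ** transpose K = mat 1"
      using arg_cong[OF conjunct2[OF HK], of transpose]
      by (simp add: matrix_transpose_mul HT)
    then have "K ** (H ** transpose K) = K" by simp
    then show ?thesis using HK by (simp add: matrix_mul_assoc)
  qed
  have bSS: "beta_SS XS y = G *v y" for y
    unfolding beta_SS_def G_def K_def H_def
    by (simp add: matrix_vector_mul_assoc scaleR_matrix_vector_assoc del: transpose_matrix_vector)
  have GX: "G ** XS = mat 1"
  proof -
    have "G ** XS = K ** H"
      unfolding G_def H_def Sigma_hat_def
      by (simp add: scalar_matrix_assoc[symmetric] matrix_scalar_ac matrix_mul_assoc)
    then show ?thesis using HK by simp
  qed
  have PP: "P ** P = P"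
    unfolding P_def by (simp add: matrix_mul_assoc[symmetric]) (simp add: matrix_mul_assoc GX)
  have PT: "transpose P = P"
    unfolding P_def G_def
    by (simp add: matrix_transpose_mul transpose_scalar KT matrix_scalar_ac
        scalar_matrix_assoc[symmetric] matrix_mul_assoc)
  define RA where "RA = (\<lambda>A :: real^'n^'d. worst_risk SigT XS \<sigma> r (\<lambda>y. A *v y))"
  define RC where "RC = (\<lambda>C :: real^'d^'d. worst_risk SigT XS \<sigma> r (\<lambda>y. C *v beta_SS XS y))"
  have RCA: "RC C = RA (C ** G)" for C
    unfolding RC_def RA_def bSS by (simp add: matrix_vector_mul_assoc)
  have part1: "RC (A ** XS) \<le> RA A" for A
  proof -
    have "RC (A ** XS) = RA (A ** P)"
      unfolding RCA P_def by (simp add: matrix_mul_assoc)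
    also have "\<dots> = (SUP \<beta>\<in>cball 0 r. wnorm2 SigT ((A ** XS) *v \<beta> - \<beta>)
          + \<sigma>\<^sup>2 * trace (transpose (A ** P) ** SigT ** (A ** P)))"
      unfolding RA_def worst_lin[OF s]
      by (simp add: P_def matrix_mul_assoc[symmetric] GX)
    also have "\<dots> \<le> (SUP \<beta>\<in>cball 0 r. wnorm2 SigT ((A ** XS) *v \<beta> - \<beta>)
          + \<sigma>\<^sup>2 * trace (transpose A ** SigT ** A))"
    proof (rule cSUP_mono[OF _ bdd_bias])
      show "cball (0::real^'d) r \<noteq> {}" using r by simp
      fix \<beta> :: "real^'d" assume "\<beta> \<in> cball 0 r"
      then show "\<exists>m\<in>cball 0 r. wnorm2 SigT ((A ** XS) *v \<beta> - \<beta>)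
          + \<sigma>\<^sup>2 * trace (transpose (A ** P) ** SigT ** (A ** P))
          \<le> wnorm2 SigT ((A ** XS) *v m - m) + \<sigma>\<^sup>2 * trace (transpose A ** SigT ** A)"
        using trace_proj_le[OF psd PT PP, of A]
        by (intro bexI[of _ \<beta>]) (auto intro!: mult_left_mono)
    qed
    also have "\<dots> = RA A" unfolding RA_def worst_lin[OF s] ..
    finally show ?thesis .
  qed
  have nnA: "0 \<le> RA A" for A unfolding RA_def by (rule worst_lin_nonneg[OF s r psd])
  have nnC: "0 \<le> RC C" for C unfolding RCA by (rule nnA)
  have "(INF A. RA A) \<le> (INF C. RC C)"
    by (rule cINF_mono) (auto intro!: bdd_belowI[of _ 0] nnA simp: RCA)
  moreover have "(INF C. RC C) \<le> (INF A. RA A)"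
    by (rule cINF_mono) (auto intro!: bdd_belowI[of _ 0] nnC part1)
  ultimately show ?thesis
    using part1 unfolding RA_def RC_def by (auto intro: antisym)
qed

end
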